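(* Let $Y$ be a first-countable topological space such that $\mathrm{H}_1([0,1],Y)\subseteq \mathrm{B}_1([0,1],Y)$. Then $Y$ is almost arcwise connected and locally almost arcwise connected.
   Context: $\mathrm{H}_1(X,Y)$: mappings $f:X\to Y$ with $f^{-1}(V)$ an $F_\sigma$-set for every open $V\subseteq Y$. $\mathrm{B}_1(X,Y)$: pointwise limits of sequences of continuous mappings $X\to Y$. Two sets $A,B$ are joined by an arc in a set $S$ if there is a continuous $\gamma:[0,1]\to Y$ with $\gamma([0,1])\subseteq S$, $\gamma(0)\in A$, $\gamma(1)\in B$. $Y$ is almost arcwise connected if each pair of nonempty open subsets of $Y$ can be joined by an arc in $Y$. $Y$ is locally almost arcwise connected at $y$ if for every neighborhood $V$ of $y$ there is a neighborhood $U\subseteq V$ of $y$ such that each pair of nonempty open subsets of $U$ can be joined by an arc in $\overline V$; locally almost arcwise connected means this holds at every point. *)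

theory Defs
  imports "HOL-Analysis.Analysis"
begin

text \<open>Maps from [0,1] to Y are represented by functions real => 'a; only their values
on {0..1} matter.\<close>

definition H1_on01 :: "(real \<Rightarrow> 'a::topological_space) \<Rightarrow> bool" where
  "H1_on01 f \<longleftrightarrow>
     (\<forall>V. open V \<longrightarrow> fsigma_in (top_of_set {0..1}) ({0..1} \<inter> f -` V))"

definition B1_on01 :: "(real \<Rightarrow> 'a::topological_space) \<Rightarrow> bool" where
  "B1_on01 f \<longleftrightarrow>
     (\<exists>g :: nat \<Rightarrow> real \<Rightarrow> 'a. (\<forall>n. continuous_on {0..1} (g n)) \<and>
        (\<forall>x\<in>{0..1}. (\<lambda>n. g n x) \<longlonglongrightarrow> f x))"

definition joined_by_arc_in :: "'a::topological_space set \<Rightarrow> 'a set \<Rightarrow> 'a set \<Rightarrow> bool" where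
  "joined_by_arc_in A B S \<longleftrightarrow>
     (\<exists>\<gamma>. path \<gamma> \<and> path_image \<gamma> \<subseteq> S \<and> pathstart \<gamma> \<in> A \<and> pathfinish \<gamma> \<in> B)"

definition almost_arcwise_connected :: "'a::topological_space itself \<Rightarrow> bool" where
  "almost_arcwise_connected _ \<longleftrightarrow>
     (\<forall>A B :: 'a set. open A \<and> open B \<and> A \<noteq> {} \<and> B \<noteq> {} \<longrightarrow>
        joined_by_arc_in A B UNIV)"

definition locally_almost_arcwise_connected_at :: "'a::topological_space \<Rightarrow> bool" where
  "locally_almost_arcwise_connected_at y \<longleftrightarrow>
     (\<forall>V. open V \<and> y \<in> V \<longrightarrow>
        (\<exists>U. open U \<and> y \<in> U \<and> U \<subseteq> V \<and>
           (\<forall>A B. open A \<and> open B \<and> A \<subseteq> U \<and> B \<subseteq> U \<and> A \<noteq> {} \<and> B \<noteq> {} \<longrightarrow>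
              joined_by_arc_in A B (closure V))))"

definition locally_almost_arcwise_connected :: "'a::topological_space itself \<Rightarrow> bool" where
  "locally_almost_arcwise_connected _ \<longleftrightarrow>
     (\<forall>y::'a. locally_almost_arcwise_connected_at y)"

end

theory Submission
  imports Defs
begin

lemma fsig_countable:
  assumes "countable S" "S \<subseteq> {0..1::real}"
  shows "fsigma_in (top_of_set {0..1}) S"
proof -
  have "S = \<Union> ((\<lambda>x. {x}) ` S)" by auto
  moreover have "fsigma_in (top_of_set {0..1}) (\<Union> ((\<lambda>x. {x}) ` S))"
  proof (rule fsigma_in_Union)
    show "countable ((\<lambda>x. {x}) ` S)" using assms by simp
  next
    fix T assume "T \<in> (\<lambda>x. {x}) ` S"
    then obtain x where x: "T = {x}" "x \<in> {0..1}" using assms by auto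
    have "closedin (top_of_set {0..1}) ({0..1} \<inter> {x})"
      by (rule closedin_closed_Int) simp
    then show "fsigma_in (top_of_set {0..1}) T" using x
      by (simp add: closed_imp_fsigma_in Int_absorb1)
  qed
  ultimately show ?thesis by simp
qed

lemma fsig_open:
  assumes "openin (top_of_set {0..1::real}) S" shows "fsigma_in (top_of_set {0..1}) S"
  by (rule open_imp_fsigma_in[OF metrizable_space_subtopology[OF metrizable_space_euclidean] assms])

lemma arc_lemma:
  fixes g :: "real \<Rightarrow> 'a::topological_space"
  assumes "continuous_on {0..1} g" "p \<in> {0..1}" "q \<in> {0..1}" "g p \<in> A" "g q \<in> B"
    "g ` closed_segment p q \<subseteq> S"
  shows "joined_by_arc_in A B S"
proof -
  have seg: "closed_segment p q \<subseteq> {0..1}" using assms(2,3) by (simp add: closed_segment_subset)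
  let ?\<gamma> = "g \<circ> linepath p q"
  have "path ?\<gamma>" by (rule path_continuous_image) (auto intro: continuous_on_subset[OF assms(1) seg])
  moreover have "path_image ?\<gamma> = g ` closed_segment p q" by (simp add: path_image_compose)
  moreover have "pathstart ?\<gamma> = g p" "pathfinish ?\<gamma> = g q"
    by (simp_all add: pathstart_compose pathfinish_compose)
  ultimately show ?thesis using assms unfolding joined_by_arc_in_def by metis
qed

lemma part1:
  assumes H: "\<forall>f :: real \<Rightarrow> 'a::topological_space. H1_on01 f \<longrightarrow> B1_on01 f"
  shows "almost_arcwise_connected TYPE('a)"
  unfolding almost_arcwise_connected_def
proof (intro allI impI)
  fix A B :: "'a set" assume "open A \<and> open B \<and> A \<noteq> {} \<and> B \<noteq> {}"
  then obtain a b where ab: "a \<in> A" "b\<in>B" "open A" "open B" by auto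
  define f where "f x = (if x = 1 then b else a)" for x :: real
  have "H1_on01 f"
    unfolding H1_on01_def
  proof (intro allI impI)
    fix W :: "'a set" assume "open W"
    have eq: "{0..1} \<inter> f -` W = (if a \<in> W then {0..1} \<inter> {..<1} else {}) \<union> (if b \<in> W then {1} else {})"
      by (auto simp: f_def split: if_splits)
    have 1: "fsigma_in (top_of_set {0..1}) ({0..1} \<inter> {..<1::real})"
      by (rule fsig_open) (auto intro: openin_open_Int)
    have 2: "fsigma_in (top_of_set {0..1}) {1::real}" by (rule fsig_countable) auto
    show "fsigma_in (top_of_set {0..1}) ({0..1} \<inter> f -` W)"
      unfolding eq by (intro fsigma_in_Un) (use 1 2 in auto)
  qed
  then obtain g where g: "\<forall>n. continuous_on {0..1} (g n)" "\<forall>x\<in>{0..1}. (\<lambda>n. g n x) \<longlonglongrightarrow> f x"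
    using H B1_on01_def by blast
  have e1: "eventually (\<lambda>n. g n 0 \<in> A) sequentially"
    using g(2)[rule_format, of 0] ab by (intro topological_tendstoD) (auto simp: f_def)
  have e2: "eventually (\<lambda>n. g n 1 \<in> B) sequentially"
    using g(2)[rule_format, of 1] ab by (intro topological_tendstoD) (auto simp: f_def)
  from eventually_conj[OF e1 e2] obtain n where "g n 0 \<in> A" "g n 1 \<in> B"
    by (auto simp: eventually_sequentially)
  then show "joined_by_arc_in A B UNIV"
    by (intro arc_lemma[of "g n" 0 1]) (use g in auto)
qed


definition dy :: "real set" where "dy = {x. \<exists>m::nat. x * 2^m \<in> \<int>}"
definition lev :: "real \<Rightarrow> nat" where "lev x = (LEAST m. x * 2^m \<in> \<int>)"
definition num :: "real \<Rightarrow> int" where "num x = \<lfloor>x * 2^lev x\<rfloor>"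

lemma lev_odd:
  assumes "odd r"
  shows "(of_int r :: real) / 2^m \<in> dy" "lev ((of_int r :: real) / 2^m) = m" "num ((of_int r :: real) / 2^m) = r"
proof -
  have 1: "(of_int r :: real) / 2^m * 2^m \<in> \<int>" by simp
  have 2: "\<not> (of_int r / 2^m * (2::real)^k \<in> \<int>)" if "k < m" for k
  proof
    assume "of_int r / 2^m * (2::real)^k \<in> \<int>"
    then obtain z where z: "of_int r / 2^m * (2::real)^k = of_int z" by (auto elim: Ints_cases)
    have "(2::real)^m = 2^k * 2^(m-k)" using that by (simp add: power_add[symmetric])
    hence "of_int r = of_int z * (2::real)^(m-k)" using z by (simp add: field_simps)
    hence "r = z * 2^(m-k)" by (metis of_int_eq_iff of_int_mult of_int_power of_int_numeral)
    moreover have "even (z * 2^(m-k))" using that by simp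
    ultimately show False using assms by simp
  qed
  show "of_int r / 2^m \<in> dy" unfolding dy_def using 1 by blast
  show lv: "lev (of_int r / 2^m) = m" unfolding lev_def
    by (rule Least_equality) (use 1 2 in \<open>auto simp: not_less[symmetric]\<close>)
  show "num (of_int r / 2^m) = r" unfolding num_def lv by simp
qed

lemma lev_spec: "x \<in> dy \<Longrightarrow> x * 2^lev x \<in> \<int>"
  unfolding dy_def lev_def by (auto intro: LeastI_ex)

lemma lev_le: "x * 2^k \<in> \<int> \<Longrightarrow> lev x \<le> k"
  unfolding lev_def by (rule Least_le)

lemma ints_mono: assumes "x * 2^k \<in> \<int>" "k \<le> K" shows "x * (2::real)^K \<in> \<int>"
proof -
  have "x * (2::real)^K = (x * 2^k) * 2^(K-k)" using assms(2)
    by (metis le_add_diff_inverse mult.assoc power_add)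
  moreover have "(2::real)^(K-k) \<in> \<int>" by simp
  ultimately show ?thesis using assms(1) by (metis Ints_mult)
qed

lemma countable_dy: "countable dy"
proof -
  have "dy \<subseteq> (\<lambda>(m::nat,k::int). of_int k / 2^m) ` UNIV"
  proof
    fix x assume "x \<in> dy"
    then obtain m z where "x * 2^m = of_int z" unfolding dy_def by (auto elim: Ints_cases)
    then have "x = of_int z / 2^m" by (simp add: field_simps)
    then show "x \<in> (\<lambda>(m::nat,k::int). of_int k / 2^m) ` UNIV" by auto
  qed
  then show ?thesis by (rule countable_subset) simp
qed

lemma finite_F: "finite {x\<in>{0..1::real}. x * 2^K \<in> \<int>}"
proof -
  have "{x\<in>{0..1::real}. x * 2^K \<in> \<int>} \<subseteq> (\<lambda>k::int. of_int k / 2^K) ` {0..2^K}"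
  proof
    fix x assume x: "x \<in> {x\<in>{0..1::real}. x * 2^K \<in> \<int>}"
    then obtain z where z: "x * 2^K = of_int z" by (auto elim: Ints_cases)
    then have xe: "x = of_int z / 2^K" by (simp add: field_simps)
    have "0 \<le> x * 2^K" "x * 2^K \<le> 2^K" using x by auto
    then have "0 \<le> z" "real_of_int z \<le> real_of_int (2^K)" using z by auto
    then have "z \<in> {0..2^K}" by (simp only: of_int_le_iff) simp
    then show "x \<in> (\<lambda>k::int. of_int k / 2^K) ` {0..2^K}" using xe by auto
  qed
  then show ?thesis by (rule finite_subset) simp
qed

lemma dyadic_pair:
  fixes u \<delta> :: real
  assumes "\<delta> > 0"
  shows "\<exists>m r s. odd r \<and> odd s \<and> r mod 4 = 1 \<and> s mod 4 = 3 \<and>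
     of_int r / 2^m \<in> {u..u+\<delta>} \<and> of_int s / 2^m \<in> {u..u+\<delta>}"
proof -
  obtain m where m: "8 / \<delta> < (2::real)^m" using real_arch_pow[of 2 "8/\<delta>"] by auto
  have pm: "(0::real) < 2^m" by simp
  have m8: "8 < 2^m * \<delta>" using m assms by (simp add: divide_less_eq mult.commute)
  define j where "j = \<lceil>u * 2^m\<rceil>"
  define r where "r = j + (1 - j) mod 4"
  define s where "s = j + (3 - j) mod 4"
  have rs: "r mod 4 = 1" "s mod 4 = 3" "odd r" "odd s" "j \<le> r" "r \<le> j + 3" "j \<le> s" "s \<le> j + 3"
    unfolding r_def s_def by presburger+
  have j1: "u * 2^m \<le> of_int j" "of_int j < u * 2^m + 1" unfolding j_def by linarith+
  have mem: "of_int t / 2^m \<in> {u..u+\<delta>}" if "j \<le> t" "t \<le> j + 3" for t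
  proof -
    have "u * 2^m \<le> of_int t" "of_int t \<le> (u + \<delta>) * 2^m"
      using that j1 m8 by (auto simp: algebra_simps)
    then show ?thesis using pm by (simp add: pos_le_divide_eq pos_divide_le_eq)
  qed
  show ?thesis using rs mem[of r] mem[of s] by blast
qed


lemma part2:
  assumes H: "\<forall>f :: real \<Rightarrow> 'a::first_countable_topology. H1_on01 f \<longrightarrow> B1_on01 f"
  shows "locally_almost_arcwise_connected_at (y::'a)"
  unfolding locally_almost_arcwise_connected_at_def
proof (intro allI impI, rule ccontr)
  fix V :: "'a set" assume V: "open V \<and> y \<in> V"
  assume "\<not> (\<exists>U. open U \<and> y \<in> U \<and> U \<subseteq> V \<and>
           (\<forall>A B. open A \<and> open B \<and> A \<subseteq> U \<and> B \<subseteq> U \<and> A \<noteq> {} \<and> B \<noteq> {} \<longrightarrow>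
              joined_by_arc_in A B (closure V)))"
  note nb = this
  have bad: "\<exists>A B. open A \<and> open B \<and> A \<subseteq> U \<and> B \<subseteq> U
      \<and> A \<noteq> {} \<and> B \<noteq> {} \<and> \<not> joined_by_arc_in A B (closure V)"
    if U: "open U" "y \<in> U" "U \<subseteq> V" for U
  proof -
    have "\<not> (\<forall>A B. open A \<and> open B \<and> A \<subseteq> U \<and> B \<subseteq> U \<and> A \<noteq> {} \<and> B \<noteq> {} \<longrightarrow>
              joined_by_arc_in A B (closure V))"
    proof
      assume "\<forall>A B. open A \<and> open B \<and> A \<subseteq> U \<and> B \<subseteq> U \<and> A \<noteq> {} \<and> B \<noteq> {} \<longrightarrow>
              joined_by_arc_in A B (closure V)"
      with U have "\<exists>U. open U \<and> y \<in> U \<and> U \<subseteq> V \<and>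
           (\<forall>A B. open A \<and> open B \<and> A \<subseteq> U \<and> B \<subseteq> U \<and> A \<noteq> {} \<and> B \<noteq> {} \<longrightarrow>
              joined_by_arc_in A B (closure V))" by (intro exI[of _ U]) simp
      with nb show False by contradiction
    qed
    then show ?thesis by (simp only: not_all not_imp) (metis)
  qed
  obtain Bs where Bs: "\<And>i. open (Bs i)" "\<And>i. y \<in> Bs i"
    "\<And>S. open S \<Longrightarrow> y \<in> S \<Longrightarrow> eventually (\<lambda>i. Bs i \<subseteq> S) sequentially"
    by (rule countable_basis_at_decseq[of y]) blast+
  have "\<forall>i. \<exists>A B. open A \<and> open B \<and> A \<subseteq> Bs i \<inter> V \<and> B \<subseteq> Bs i \<inter> V
      \<and> A \<noteq> {} \<and> B \<noteq> {} \<and> \<not> joined_by_arc_in A B (closure V)"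
  proof
    fix i show "\<exists>A B. open A \<and> open B \<and> A \<subseteq> Bs i \<inter> V \<and> B \<subseteq> Bs i \<inter> V
      \<and> A \<noteq> {} \<and> B \<noteq> {} \<and> \<not> joined_by_arc_in A B (closure V)"
      by (rule bad) (use Bs V in auto)
  qed
  from choice[OF this] obtain AA where "\<forall>i. \<exists>B. open (AA i) \<and> open B \<and> AA i \<subseteq> Bs i \<inter> V \<and> B \<subseteq> Bs i \<inter> V
      \<and> AA i \<noteq> {} \<and> B \<noteq> {} \<and> \<not> joined_by_arc_in (AA i) B (closure V)" by blast
  from choice[OF this] obtain BB where AB0: "\<forall>i. open (AA i) \<and> open (BB i) \<and> AA i \<subseteq> Bs i \<inter> V \<and> BB i \<subseteq> Bs i \<inter> V
      \<and> AA i \<noteq> {} \<and> BB i \<noteq> {} \<and> \<not> joined_by_arc_in (AA i) (BB i) (closure V)" by blast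
  have AB: "\<And>i. open (AA i)" "\<And>i. open (BB i)" "\<And>i. AA i \<subseteq> Bs i \<inter> V"
    "\<And>i. BB i \<subseteq> Bs i \<inter> V" "\<And>i. AA i \<noteq> {}" "\<And>i. BB i \<noteq> {}"
    "\<And>i. \<not> joined_by_arc_in (AA i) (BB i) (closure V)"
    using AB0 by blast+
  define a where "a i = (SOME x. x \<in> AA i)" for i
  define b where "b i = (SOME x. x \<in> BB i)" for i
  have a: "a i \<in> AA i" for i unfolding a_def using AB(5)[of i] by (simp add: some_in_eq)
  have b: "b i \<in> BB i" for i unfolding b_def using AB(6)[of i] by (simp add: some_in_eq)
  define f where "f x = (if x \<in> dy then (if num x mod 4 = 1 then a (lev x)
       else if num x mod 4 = 3 then b (lev x) else y) else y)" for x
  have aV: "a i \<in> V" "b i \<in> V" for i using a[of i] b[of i] AB(3,4)[of i] by blast+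
  have fV: "f x \<in> V" for x using aV V unfolding f_def by auto
  have "H1_on01 f"
    unfolding H1_on01_def
  proof (intro allI impI)
    fix W :: "'a set" assume W: "open W"
    show "fsigma_in (top_of_set {0..1}) ({0..1} \<inter> f -` W)"
    proof (cases "y \<in> W")
      case False
      have "{0..1} \<inter> f -` W \<subseteq> dy" using False unfolding f_def by (auto split: if_splits)
      then show ?thesis by (intro fsig_countable) (auto intro: countable_subset[OF _ countable_dy])
    next
      case True
      obtain K where K: "\<And>i. i \<ge> K \<Longrightarrow> Bs i \<subseteq> W"
        using Bs(3)[OF W True] by (auto simp: eventually_sequentially)
      define F where "F = {x\<in>{0..1::real}. x * 2^K \<in> \<int>}"
      have fF: "finite F" unfolding F_def by (rule finite_F)
      have out: "f x \<in> W" if "x \<in> {0..1} - F" for x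
      proof (cases "x \<in> dy")
        case True
        have "\<not> lev x \<le> K"
        proof
          assume "lev x \<le> K"
          then have "x * 2^K \<in> \<int>" using ints_mono[OF lev_spec[OF True]] by blast
          then show False using that unfolding F_def by auto
        qed
        then have "a (lev x) \<in> W" "b (lev x) \<in> W" using K[of "lev x"] a b AB(3,4) by force+
        then show ?thesis using \<open>y \<in> W\<close> unfolding f_def by auto
      next
        case False
        then show ?thesis using \<open>y \<in> W\<close> unfolding f_def by auto
      qed
      have eq: "{0..1} \<inter> f -` W = ({0..1} \<inter> (- F)) \<union> (({0..1} \<inter> f -` W) \<inter> F)"
        using out by auto
      have 1: "fsigma_in (top_of_set {0..1}) ({0..1} \<inter> (- F))"
        using fF by (intro fsig_open openin_open_Int) (simp add: open_Compl finite_imp_closed)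
      have 2: "fsigma_in (top_of_set {0..1}) (({0..1} \<inter> f -` W) \<inter> F)"
        using fF by (intro fsig_countable) (auto intro: countable_finite)
      show ?thesis by (subst eq) (rule fsigma_in_Un[OF 1 2])
    qed
  qed
  then have "B1_on01 f" using H by blast
  then obtain g where g0: "\<forall>n. continuous_on {0..1} (g n)" "\<forall>x\<in>{0..1}. (\<lambda>n. g n x) \<longlonglongrightarrow> f x"
    unfolding B1_on01_def by blast
  have g: "\<And>n. continuous_on {0..1} (g n)" "\<And>x. x\<in>{0..1} \<Longrightarrow> (\<lambda>n. g n x) \<longlonglongrightarrow> f x"
    using g0 by auto
  define E where "E N = {x\<in>{0..1::real}. \<forall>n\<ge>N. g n x \<in> closure V}" for N
  have closedE: "closed (E N)" for N
  proof -
    have "E N = {0..1} \<inter> (\<Inter>n\<in>{N..}. {0..1} \<inter> g n -` closure V)" unfolding E_def by auto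
    moreover have "closed ({0..1} \<inter> g n -` closure V)" for n
      by (rule continuous_closed_preimage[OF g(1)]) auto
    ultimately show ?thesis by (metis closed_Int closed_INT closed_atLeastAtMost)
  qed
  have cover: "\<exists>N. x \<in> E N" if x: "x \<in> {0..1}" for x
  proof -
    have "eventually (\<lambda>n. g n x \<in> V) sequentially"
      using g(2)[OF x] V fV by (intro topological_tendstoD) auto
    then obtain N where "\<And>n. n \<ge> N \<Longrightarrow> g n x \<in> V" by (auto simp: eventually_sequentially)
    then show ?thesis using x closure_subset unfolding E_def by blast
  qed
  have "\<exists>N. \<not> {0..1} \<subseteq> closure ({0..1} - E N)"
  proof (rule ccontr)
    assume "\<not> ?thesis"
    then have dense: "\<And>N. {0..1} \<subseteq> closure ({0..1::real} - E N)" by blast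
    have "{0..1::real} \<subseteq> closure (\<Inter> (range (\<lambda>N. {0..1} - E N)))"
    proof (rule Baire)
      fix T assume "T \<in> range (\<lambda>N. {0..1::real} - E N)"
      then obtain N where T: "T = {0..1} - E N" by auto
      have "openin (top_of_set {0..1}) ({0..1} \<inter> (- E N))"
        using closedE[of N] by (intro openin_open_Int) (simp add: open_Compl)
      then show "openin (top_of_set {0..1}) T \<and> {0..1} \<subseteq> closure T"
        using T dense[of N] by (simp add: Diff_eq)
    qed auto
    moreover have "\<Inter> (range (\<lambda>N. {0..1::real} - E N)) = {}" using cover by auto
    ultimately have "{0..1::real} \<subseteq> {}" by (metis closure_empty)
    then show False by simp
  qed
  then obtain N x0 where x0: "x0 \<in> {0..1::real}" "x0 \<notin> closure ({0..1} - E N)" by blast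
  then obtain e where e: "e > 0" "\<And>z. z \<in> {0..1} - E N \<Longrightarrow> \<not> dist z x0 < e"
    unfolding closure_approachable by blast
  define \<delta> where "\<delta> = min (e/2) (1/2)"
  define u where "u = (if x0 \<le> 1/2 then x0 else x0 - \<delta>)"
  have dpos: "\<delta> > 0" using e unfolding \<delta>_def by simp
  have sub: "{u..u+\<delta>} \<subseteq> E N"
  proof
    fix z assume z: "z \<in> {u..u+\<delta>}"
    have "z \<in> {0..1}" "dist z x0 < e" using z x0 e(1) unfolding u_def \<delta>_def dist_real_def
      by (auto split: if_splits)
    then show "z \<in> E N" using e(2) by blast
  qed
  obtain m r s where rs: "odd r" "odd s" "r mod 4 = 1" "s mod 4 = 3"
    "of_int r / 2^m \<in> {u..u+\<delta>}" "of_int s / 2^m \<in> {u..u+\<delta>}"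
    using dyadic_pair[OF dpos, of u] by blast
  define p where "p = (of_int r / 2^m :: real)"
  define q where "q = (of_int s / 2^m :: real)"
  have fp: "f p = a m" unfolding f_def p_def using lev_odd[OF rs(1), of m] rs(3) by simp
  have fq: "f q = b m" unfolding f_def q_def using lev_odd[OF rs(2), of m] rs(4) by simp
  have pq01: "p \<in> {0..1}" "q \<in> {0..1}" using rs(5,6) sub unfolding p_def q_def E_def by auto
  have ep: "eventually (\<lambda>n. g n p \<in> AA m) sequentially"
    using g(2)[OF pq01(1)] fp a AB(1) by (intro topological_tendstoD) auto
  have eq: "eventually (\<lambda>n. g n q \<in> BB m) sequentially"
    using g(2)[OF pq01(2)] fq b AB(2) by (intro topological_tendstoD) auto
  from eventually_conj[OF eventually_conj[OF ep eq] eventually_ge_at_top[of N]]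
  obtain n where n: "g n p \<in> AA m" "g n q \<in> BB m" "n \<ge> N"
    by (auto simp: eventually_sequentially)
  have seg: "closed_segment p q \<subseteq> E N"
    using rs(5,6) sub unfolding p_def q_def
    by (meson closed_segment_subset convex_real_interval(5) order_trans)
  have "g n ` closed_segment p q \<subseteq> closure V" using seg n(3) unfolding E_def by auto
  then have "joined_by_arc_in (AA m) (BB m) (closure V)"
    using arc_lemma[OF g(1) pq01 n(1,2)] by blast
  then show False using AB(7) by blast
qed


theorem mainTheorem11:
  assumes "\<forall>f :: real \<Rightarrow> 'a::first_countable_topology. H1_on01 f \<longrightarrow> B1_on01 f"
  shows "almost_arcwise_connected TYPE('a) \<and> locally_almost_arcwise_connected TYPE('a)"
  using part1[OF assms] part2[OF assms] unfolding locally_almost_arcwise_connected_def by blast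

end
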